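(* Let $u_1=(1,0)$, $u_2=(0,1)$, $u_3=(-1,-1)$ in $\mathbb{Z}^2$, $S=\{u_1,u_2,u_3\}$, $P_{u_i}=P_i$ ($i=1,2,3$) the orthogonal projection of $\mathbb{C}^3$ onto $\mathbb{C}\mathbf{e}_i$, $\mathcal{S}=\sum_{i=1}^3\tau^{u_i}P_{u_i}$ and $G_3=\frac23J-I$ with $J$ the $3\times3$ all-ones matrix. Then the unitary operator $\mathcal{S}^*G_3\mathcal{S}G_3$ on $\ell^2(\mathbb{Z}^2,\mathbb{C}^3)$ has eigenvalue $1$.
   Context: $(\tau^\alpha f)(x)=f(x-\alpha)$ on $\ell^2(\mathbb{Z}^2,\mathbb{C}^3)$; $G_3$ acts pointwise; $\mathbf{e}_1,\mathbf{e}_2,\mathbf{e}_3$ is the standard basis of $\mathbb{C}^3$. Eigenvalue means point spectrum. *)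

theory Defs
  imports "HOL-Analysis.Analysis"
begin

type_synonym field2 = "int \<times> int \<Rightarrow> complex ^ 3"

definition ell2 :: "field2 set" where
  "ell2 = {f. (\<lambda>x. (norm (f x))^2) summable_on UNIV}"

definition tau :: "int \<times> int \<Rightarrow> field2 \<Rightarrow> field2" where
  "tau \<alpha> f = (\<lambda>x. f (fst x - fst \<alpha>, snd x - snd \<alpha>))"

definition e :: "3 \<Rightarrow> complex ^ 3" where
  "e i = axis i 1"

definition Proj :: "3 \<Rightarrow> complex ^ 3 \<Rightarrow> complex ^ 3" where
  "Proj i v = (v $ i) *s e i"

definition pw :: "(complex ^ 3 \<Rightarrow> complex ^ 3) \<Rightarrow> field2 \<Rightarrow> field2" where
  "pw A f = (\<lambda>x. A (f x))"

definition u :: "3 \<Rightarrow> int \<times> int" where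
  "u i = (if i = 1 then (1, 0) else if i = 2 then (0, 1) else (-1, -1))"

definition shiftS :: "field2 \<Rightarrow> field2" where
  "shiftS f = (\<lambda>x. \<Sum>i\<in>UNIV. tau (u i) (pw (Proj i) f) x)"

text \<open>Its adjoint S* = sum_i P_{u_i} tau^{-u_i}  (tau^alpha is unitary with inverse tau^{-alpha},
  P_i is self-adjoint).\<close>
definition shiftS_adj :: "field2 \<Rightarrow> field2" where
  "shiftS_adj f = (\<lambda>x. \<Sum>i\<in>UNIV. pw (Proj i) (tau (- fst (u i), - snd (u i)) f) x)"

definition J3 :: "complex ^ 3 ^ 3" where
  "J3 = (\<chi> i j. 1)"

definition G3 :: "complex ^ 3 ^ 3" where
  "G3 = (2/3 :: real) *\<^sub>R J3 - mat 1"

definition Uop :: "field2 \<Rightarrow> field2" where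
  "Uop f = shiftS_adj (pw ((*v) G3) (shiftS (pw ((*v) G3) f)))"

definition has_eigenvalue :: "(field2 \<Rightarrow> field2) \<Rightarrow> complex \<Rightarrow> bool" where
  "has_eigenvalue T c \<longleftrightarrow> (\<exists>f\<in>ell2. f \<noteq> (\<lambda>_. 0) \<and> T f = (\<lambda>x. c *s f x))"

end

theory Submission
  imports Defs
begin

definition g1 :: "int \<times> int \<Rightarrow> complex" where
  "g1 x = (if x = (0,0) then 1 else if x = (-1,-2) then -1 else 0)"
definition g2 :: "int \<times> int \<Rightarrow> complex" where
  "g2 x = (if x = (-1,-2) then 1 else if x = (1,-1) then -1 else 0)"
definition g3 :: "int \<times> int \<Rightarrow> complex" where
  "g3 x = (if x = (1,-1) then 1 else if x = (0,0) then -1 else 0)"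

definition gv :: field2 where
  "gv x = vector [g1 x, g2 x, g3 x]"

lemma t1: "g1 (a-1,b) + g2 (a, b-1) + g3 (a+1,b+1) = 0"
  unfolding g1_def g2_def g3_def by auto

lemma t2: "g1 x + g2 x + g3 x = 0"
  unfolding g1_def g2_def g3_def by auto

lemma all3: "(\<forall>i::3. P i) \<longleftrightarrow> P 1 \<and> P 2 \<and> P 3"
  by (metis exhaust_3)

lemma u_vals: "u 1 = (1,0)" "u 2 = (0,1)" "u 3 = (-1,-1)"
  by (auto simp: u_def)

lemma shiftS_comp: "shiftS f x $ k = f (fst x - fst (u k), snd x - snd (u k)) $ k"
proof -
  have "shiftS f x $ k = (\<Sum>i\<in>UNIV. (f (fst x - fst (u i), snd x - snd (u i)) $ i) * (axis i 1 $ k))"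
    by (simp add: shiftS_def tau_def pw_def Proj_def e_def sum_component)
  also have "\<dots> = f (fst x - fst (u k), snd x - snd (u k)) $ k"
    by (simp add: axis_def if_distrib cong: if_cong)
  finally show ?thesis .
qed

lemma adj_comp: "shiftS_adj f x $ k = f (fst x + fst (u k), snd x + snd (u k)) $ k"
proof -
  have "shiftS_adj f x $ k = (\<Sum>i\<in>UNIV. (f (fst x + fst (u i), snd x + snd (u i)) $ i) * (axis i 1 $ k))"
    by (simp add: shiftS_adj_def tau_def pw_def Proj_def e_def sum_component)
  also have "\<dots> = f (fst x + fst (u k), snd x + snd (u k)) $ k"
    by (simp add: axis_def if_distrib cong: if_cong)
  finally show ?thesis .
qed

lemma adj_shift: "shiftS_adj (shiftS f) = f"
  by (rule ext) (simp add: vec_eq_iff adj_comp shiftS_comp)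

lemma G_zero: fixes v :: "complex^3" assumes "v $ 1 + v $ 2 + v $ 3 = 0" shows "G3 *v v = - v"
proof -
  have "(G3 *v v) $ k = (2/3) * (v $ 1 + v $ 2 + v $ 3) - v $ k" for k
  proof -
    have "(G3 *v v) $ k = (\<Sum>j\<in>UNIV. (complex_of_real (2/3) - (if k = j then 1 else 0)) * v $ j)"
    proof -
      have "G3 $ k $ j = complex_of_real (2/3) - (if k = j then 1 else 0)" for j
      proof -
        have "G3 $ k $ j = (2/3::real) *\<^sub>R (1::complex) - (if k = j then 1 else 0)"
          by (simp add: G3_def J3_def mat_def)
        then show ?thesis by (simp add: scaleR_conv_of_real)
      qed
      then show ?thesis by (simp add: matrix_vector_mult_def)
    qed
    also have "\<dots> = (2/3) * (v $ 1 + v $ 2 + v $ 3) - v $ k"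
      using exhaust_3[of k] by (auto simp: sum_3 algebra_simps)
    finally show ?thesis .
  qed
  then show ?thesis using assms by (simp add: vec_eq_iff)
qed

lemma shiftS_neg: "shiftS (\<lambda>x. - f x) = (\<lambda>x. - shiftS f x)"
  by (rule ext) (simp add: vec_eq_iff shiftS_comp)

lemma gv_sum: "gv x $ 1 + gv x $ 2 + gv x $ 3 = 0"
  by (simp add: gv_def t2)

lemma sgv_sum: "shiftS gv x $ 1 + shiftS gv x $ 2 + shiftS gv x $ 3 = 0"
proof (cases x)
  case (Pair a b)
  have "shiftS gv x $ 1 + shiftS gv x $ 2 + shiftS gv x $ 3 = g1 (a-1,b) + g2 (a, b-1) + g3 (a+1,b+1)"
    by (simp add: Pair shiftS_comp u_vals gv_def)
  then show ?thesis using t1 by simp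
qed

lemma gv_ell2: "gv \<in> ell2"
  unfolding ell2_def
proof (rule CollectI, rule finite_nonzero_values_imp_summable_on)
  have "{x \<in> UNIV. (norm (gv x))^2 \<noteq> 0} \<subseteq> {(0,0), (1,-1), (-1,-2)}"
  proof
    fix x assume x: "x \<in> {x \<in> UNIV. (norm (gv x))^2 \<noteq> 0}"
    show "x \<in> {(0,0), (1,-1), (-1,-2)}"
    proof (rule ccontr)
      assume "x \<notin> {(0,0), (1,-1), (-1,-2)}"
      then have "g1 x = 0" "g2 x = 0" "g3 x = 0" by (auto simp: g1_def g2_def g3_def)
      then have "gv x = 0" by (simp add: gv_def vec_eq_iff all3)
      then show False using x by simp
    qed
  qed
  then show "finite {x \<in> UNIV. (norm (gv x))^2 \<noteq> 0}"
    by (rule finite_subset) simp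
qed

lemma gv_nz: "gv \<noteq> (\<lambda>_. 0)"
proof
  assume "gv = (\<lambda>_. 0)"
  then have "gv (0,0) $ 1 = 0" using fun_cong[of gv "\<lambda>_. 0" "(0,0)"] by simp
  then show False by (simp add: gv_def g1_def)
qed

lemma Uop_gv: "Uop gv = gv"
proof -
  have 1: "pw ((*v) G3) gv = (\<lambda>x. - gv x)"
    by (rule ext) (simp add: pw_def G_zero gv_sum)
  have 2: "pw ((*v) G3) (\<lambda>x. - shiftS gv x) = shiftS gv"
  proof (rule ext)
    fix x
    have "(- shiftS gv x) $ 1 + (- shiftS gv x) $ 2 + (- shiftS gv x) $ 3 = 0"
      using sgv_sum[of x] by (simp add: algebra_simps) (metis add.assoc neg_eq_iff_add_eq_0 add_uminus_conv_diff)
    then show "pw ((*v) G3) (\<lambda>x. - shiftS gv x) x = shiftS gv x"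
      by (simp add: pw_def G_zero)
  qed
  show ?thesis
    unfolding Uop_def 1 shiftS_neg 2 adj_shift ..
qed

theorem corollary5p2:
  shows "has_eigenvalue Uop 1"
  unfolding has_eigenvalue_def
  using gv_ell2 gv_nz Uop_gv by (auto intro!: bexI[of _ gv])

end
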